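(* Let $S$ be a set of patterns and let $f_n$ denote the number of rooted labeled forests on $[n]$ avoiding $S$. If the limit $L_S=\lim_{n\to\infty}\frac{f_n^{1/n}}{n}$ exists, then $L_S\in\{0\}\cup[e^{-1},1]$.
   Context: A rooted labeled forest on $[n]$ is an unordered forest on $n$ vertices, each component with a distinguished root, with distinct labels from $[n]$. A pattern of length $k$ is a permutation of $[k]$; an instance of it is a sequence of vertices $v_1,\dots,v_k$ with $v_i$ a strict ancestor of $v_{i+1}$ whose labels are in the same relative order as the pattern; a forest avoids $S$ if it contains no instance of any pattern in $S$. *)

theory Defs
  imports Complex_Main
begin

text \<open>A rooted labeled forest on [n] = {1..n} is encoded by its parent map:
  par v = None if v is a root (or v is not in [n]), par v = Some u if u is the parent of v.
  Unordered labeled rooted forests on [n] correspond bijectively to such maps.\<close>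

definition parent_rel :: "(nat \<Rightarrow> nat option) \<Rightarrow> (nat \<times> nat) set" where
  "parent_rel par = {(v, u). par v = Some u}"

definition rooted_forests :: "nat \<Rightarrow> (nat \<Rightarrow> nat option) set" where
  "rooted_forests n = {par.
     (\<forall>v. v \<notin> {1..n} \<longrightarrow> par v = None) \<and>
     (\<forall>v u. par v = Some u \<longrightarrow> u \<in> {1..n}) \<and>
     acyclic (parent_rel par)}"

definition strict_ancestor :: "(nat \<Rightarrow> nat option) \<Rightarrow> nat \<Rightarrow> nat \<Rightarrow> bool" where
  "strict_ancestor par u v \<longleftrightarrow> (v, u) \<in> (parent_rel par)\<^sup>+"

definition is_pattern :: "nat list \<Rightarrow> bool" where
  "is_pattern p \<longleftrightarrow> distinct p \<and> set p = {1..length p}"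

definition is_instance :: "(nat \<Rightarrow> nat option) \<Rightarrow> nat list \<Rightarrow> nat list \<Rightarrow> bool" where
  "is_instance par p vs \<longleftrightarrow> length vs = length p \<and>
     (\<forall>i. Suc i < length vs \<longrightarrow> strict_ancestor par (vs ! i) (vs ! Suc i)) \<and>
     (\<forall>i j. i < length vs \<longrightarrow> j < length vs \<longrightarrow> (vs ! i < vs ! j \<longleftrightarrow> p ! i < p ! j))"

definition contains :: "nat \<Rightarrow> (nat \<Rightarrow> nat option) \<Rightarrow> nat list \<Rightarrow> bool" where
  "contains n par p \<longleftrightarrow> (\<exists>vs. set vs \<subseteq> {1..n} \<and> is_instance par p vs)"

definition avoids :: "nat \<Rightarrow> (nat \<Rightarrow> nat option) \<Rightarrow> nat list set \<Rightarrow> bool" where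
  "avoids n par S \<longleftrightarrow> (\<forall>p\<in>S. \<not> contains n par p)"

definition num_avoiding :: "nat list set \<Rightarrow> nat \<Rightarrow> nat" where
  "num_avoiding S n = card {par \<in> rooted_forests n. avoids n par S}"

end

theory Submission
  imports Defs "HOL-Library.FuncSet" "HOL-Library.Sublist"
begin


lemma pow_le_fact_exp:
  fixes x :: real assumes "0 \<le> x" shows "x ^ n \<le> fact n * exp x"
proof -
  have "(\<Sum>i\<in>{n}. x ^ i /\<^sub>R fact i) \<le> (\<Sum>i. x ^ i /\<^sub>R fact i)"
    by (rule sum_le_suminf) (use exp_converges[of x] assms in \<open>auto simp: sums_iff\<close>)
  then have "x ^ n / fact n \<le> exp x"
    using exp_converges[of x] by (simp add: sums_iff divide_inverse_commute)
  then show ?thesis by (simp add: divide_le_eq mult.commute)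
qed

lemma fact_mult_le: "fact a * fact b \<le> (fact (a + b) :: nat)"
proof -
  have "fact a * fact b * ((a+b) choose a) = (fact (a+b) :: nat)"
    using binomial_fact_lemma[of a "a+b"] by simp
  moreover have "(a+b) choose a \<ge> 1" by (simp add: Suc_leI)
  ultimately show ?thesis by (metis mult.right_neutral mult_le_mono2)
qed

lemma prod_fact_le: "finite A \<Longrightarrow> (\<Prod>d\<in>A. fact (N d)) \<le> (fact (\<Sum>d\<in>A. N d) :: nat)"
proof (induction A rule: finite_induct)
  case empty then show ?case by simp
next
  case (insert x F)
  then have "(\<Prod>d\<in>insert x F. fact (N d)) = (fact (N x) :: nat) * (\<Prod>d\<in>F. fact (N d))" by simp
  also have "\<dots> \<le> fact (N x) * fact (\<Sum>d\<in>F. N d)" using insert.IH by (rule mult_le_mono2)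
  also have "\<dots> \<le> fact (N x + (\<Sum>d\<in>F. N d))" by (rule fact_mult_le)
  finally show ?case using insert by simp
qed

fun CC :: "real \<Rightarrow> nat \<Rightarrow> real" where
  "CC R 0 = 0" | "CC R (Suc k) = R * exp (CC R k)"

lemma CC_nonneg: "0 \<le> R \<Longrightarrow> 0 \<le> CC R k"
  by (induction k) auto

lemma level_ineq:
  fixes R :: real and N :: "nat \<Rightarrow> nat"
  assumes R: "0 \<le> R"
  shows "(\<Prod>d\<in>{j+1..j+k}. (R * real (N (d-1))) ^ (N d))
          \<le> (\<Prod>d\<in>{j+1..j+k}. fact (N d)) * exp (CC R k * real (N j))"
proof (induction k arbitrary: j)
  case 0 then show ?case by simp
next
  case (Suc k)
  have split: "{j+1..j+Suc k} = insert (j+1) {(j+1)+1..(j+1)+k}" by auto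
  have nin: "j+1 \<notin> {(j+1)+1..(j+1)+k}" by auto
  define m where "m = N (j+1)"
  define P where "P = (\<Prod>d\<in>{(j+1)+1..(j+1)+k}. (R * real (N (d-1))) ^ (N d))"
  define F where "F = (\<Prod>d\<in>{(j+1)+1..(j+1)+k}. (fact (N d) :: real))"
  have IH: "P \<le> F * exp (CC R k * real m)" using Suc.IH[of "j+1"] unfolding P_def F_def m_def .
  have F0: "0 \<le> F" unfolding F_def by (rule prod_nonneg) simp
  have "(\<Prod>d\<in>{j+1..j+Suc k}. (R * real (N (d-1))) ^ (N d)) = (R * real (N j)) ^ m * P"
    unfolding split P_def m_def by (subst prod.insert) (use nin in auto)
  also have "\<dots> \<le> (R * real (N j)) ^ m * (F * exp (CC R k * real m))"
    using IH R by (intro mult_left_mono) auto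
  also have "\<dots> = ((R * real (N j)) * exp (CC R k)) ^ m * F"
    by (simp add: power_mult_distrib exp_of_nat_mult[symmetric] mult.commute mult.left_commute)
  also have "\<dots> \<le> (fact m * exp ((R * real (N j)) * exp (CC R k))) * F"
    using R F0 by (intro mult_right_mono pow_le_fact_exp) auto
  also have "\<dots> = (\<Prod>d\<in>{j+1..j+Suc k}. fact (N d)) * exp (CC R (Suc k) * real (N j))"
    unfolding split F_def m_def by (subst prod.insert) (use nin in \<open>auto simp: mult_ac\<close>)
  finally show ?case .
qed



lemma subseq_set: "subseq ys xs \<Longrightarrow> set ys \<subseteq> set xs"
  by (induction rule: list_emb.induct) auto

lemma subseq_sorted_wrt: "subseq ys xs \<Longrightarrow> sorted_wrt P xs \<Longrightarrow> sorted_wrt P ys"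
proof (induction rule: list_emb.induct)
  case (list_emb_Nil ys) then show ?case by simp
next
  case (list_emb_Cons xs ys y) then show ?case by simp
next
  case (list_emb_Cons2 x y xs ys)
  then show ?case using subseq_set[of xs ys] by auto
qed

lemma ES_aux:
  "\<forall>a b (xs::nat list). a + b = n \<longrightarrow> distinct xs \<longrightarrow> 2^(a+b) \<le> length xs \<longrightarrow>
     (\<exists>ys. subseq ys xs \<and> ((length ys = a \<and> sorted_wrt (<) ys) \<or> (length ys = b \<and> sorted_wrt (>) ys)))"
proof (induction n rule: less_induct)
  case (less n)
  show ?case
  proof (intro allI impI)
    fix a b and xs :: "nat list"
    assume n: "a + b = n" and d: "distinct xs" and len: "2^(a+b) \<le> length xs"
    show "\<exists>ys. subseq ys xs \<and> ((length ys = a \<and> sorted_wrt (<) ys) \<or> (length ys = b \<and> sorted_wrt (>) ys))"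
    proof (cases "a = 0 \<or> b = 0")
      case True
      then show ?thesis by (intro exI[of _ "[]"]) auto
    next
      case False
      then obtain x xs' where xs: "xs = x # xs'"
        using len by (cases xs) auto
      define G where "G = filter (\<lambda>y. x < y) xs'"
      define W where "W = filter (\<lambda>y. \<not> x < y) xs'"
      have lsum: "length G + length W = length xs'"
        unfolding G_def W_def by (rule sum_length_filter_compl)
      have xn: "x \<notin> set xs'" and d': "distinct xs'" using d xs by auto
      obtain k where k: "a + b = Suc k" using False by (cases "a+b") auto
      have pw: "(2::nat)^(a+b) = 2 * 2^(a+b-1)" using k by simp
      have "2 * 2^(a+b-1) \<le> length G + length W + 1" using len xs lsum pw by simp
      then have "2^(a+b-1) \<le> length G \<or> 2^(a+b-1) \<le> length W"
        by linarith
      then show ?thesis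
      proof
        assume h: "2^(a+b-1) \<le> length G"
        have "a - 1 + b < n" "distinct G" "2^((a-1)+b) \<le> length G"
          using False n h d' by (auto simp: G_def)
        then obtain ys where ys: "subseq ys G"
          "(length ys = a - 1 \<and> sorted_wrt (<) ys) \<or> (length ys = b \<and> sorted_wrt (>) ys)"
          using less.IH[of "a - 1 + b"] by blast
        have sG: "subseq ys xs'" using ys(1) subseq_order.trans subseq_filter_left G_def by blast
        have gx: "\<forall>y\<in>set ys. x < y" using subseq_set[OF ys(1)] G_def by auto
        from ys(2) show ?thesis
        proof
          assume "length ys = a - 1 \<and> sorted_wrt (<) ys"
          then show ?thesis using False gx sG xs
            by (intro exI[of _ "x # ys"]) auto
        next
          assume "length ys = b \<and> sorted_wrt (>) ys"
          then show ?thesis using sG xs by (intro exI[of _ ys]) auto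
        qed
      next
        assume h: "2^(a+b-1) \<le> length W"
        have "a + (b - 1) < n" "distinct W" "2^(a+(b-1)) \<le> length W"
          using False n h d' by (auto simp: W_def)
        then obtain ys where ys: "subseq ys W"
          "(length ys = a \<and> sorted_wrt (<) ys) \<or> (length ys = b - 1 \<and> sorted_wrt (>) ys)"
          using less.IH[of "a + (b - 1)"] by blast
        have sG: "subseq ys xs'" using ys(1) subseq_order.trans subseq_filter_left W_def by blast
        have gx: "\<forall>y\<in>set ys. y < x"
        proof
          fix y assume "y \<in> set ys"
          then have "y \<in> set W" using subseq_set[OF ys(1)] by blast
          then have "y \<in> set xs'" "\<not> x < y" unfolding W_def by auto
          then show "y < x" using xn by (cases "y = x") auto
        qed
        from ys(2) show ?thesis
        proof
          assume "length ys = b - 1 \<and> sorted_wrt (>) ys"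
          then show ?thesis using False gx sG xs
            by (intro exI[of _ "x # ys"]) auto
        next
          assume "length ys = a \<and> sorted_wrt (<) ys"
          then show ?thesis using sG xs by (intro exI[of _ ys]) auto
        qed
      qed
    qed
  qed
qed

lemma ES:
  fixes xs :: "nat list"
  assumes "distinct xs" "2^(a+b) \<le> length xs"
  shows "\<exists>ys. subseq ys xs \<and> ((length ys = a \<and> sorted_wrt (<) ys) \<or> (length ys = b \<and> sorted_wrt (>) ys))"
  using ES_aux assms by blast



definition anc :: "(nat \<Rightarrow> nat option) \<Rightarrow> nat \<Rightarrow> nat set" where
  "anc par v = {u. strict_ancestor par u v}"

lemma rf_D:
  assumes "par \<in> rooted_forests n"
  shows "\<And>v. v \<notin> {1..n} \<Longrightarrow> par v = None" "\<And>v u. par v = Some u \<Longrightarrow> u \<in> {1..n}"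
    "acyclic (parent_rel par)"
  using assms unfolding rooted_forests_def mem_Collect_eq by blast+

lemma anc_None: "par v = None \<Longrightarrow> anc par v = {}"
proof -
  assume pv: "par v = None"
  have "x \<notin> anc par v" for x
  proof
    assume "x \<in> anc par v"
    then have "(v, x) \<in> (parent_rel par)\<^sup>+" by (simp add: anc_def strict_ancestor_def)
    from tranclD[OF this] obtain y where "(v, y) \<in> parent_rel par" by blast
    then show False using pv by (simp add: parent_rel_def)
  qed
  then show ?thesis by blast
qed

lemma anc_Some: "par v = Some u \<Longrightarrow> anc par v = insert u (anc par u)"
proof -
  assume pv: "par v = Some u"
  let ?r = "parent_rel par"
  have vu: "(v, u) \<in> ?r" using pv by (simp add: parent_rel_def)
  show ?thesis
  proof (intro equalityI subsetI)
    fix x assume "x \<in> anc par v"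
    then have "(v, x) \<in> ?r\<^sup>+" by (simp add: anc_def strict_ancestor_def)
    from tranclD[OF this] obtain y where y: "(v, y) \<in> ?r" "(y, x) \<in> ?r\<^sup>*" by blast
    then have "y = u" using pv by (simp add: parent_rel_def)
    then have "x = u \<or> (u, x) \<in> ?r\<^sup>+" using rtranclD[OF y(2)] by blast
    then show "x \<in> insert u (anc par u)" by (auto simp: anc_def strict_ancestor_def)
  next
    fix x assume "x \<in> insert u (anc par u)"
    then show "x \<in> anc par v" using vu
      by (auto simp: anc_def strict_ancestor_def intro: trancl_into_trancl2)
  qed
qed

lemma anc_sub: "par \<in> rooted_forests n \<Longrightarrow> anc par v \<subseteq> {1..n}"
proof
  fix x assume rf: "par \<in> rooted_forests n" and "x \<in> anc par v"
  then have "(v, x) \<in> (parent_rel par)\<^sup>+" by (simp add: anc_def strict_ancestor_def)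
  from tranclD2[OF this] obtain y where "(y, x) \<in> parent_rel par" by blast
  then show "x \<in> {1..n}" using rf_D(2)[OF rf] by (simp add: parent_rel_def)
qed

lemma anc_fin: "par \<in> rooted_forests n \<Longrightarrow> finite (anc par v)"
  by (rule finite_subset[OF anc_sub]) simp_all

lemma anc_irrefl: "par \<in> rooted_forests n \<Longrightarrow> \<not> strict_ancestor par u u"
proof -
  assume "par \<in> rooted_forests n"
  from rf_D(3)[OF this] show ?thesis unfolding acyclic_def strict_ancestor_def by blast
qed

lemma card_anc_Some:
  assumes "par \<in> rooted_forests n" "par v = Some u"
  shows "card (anc par v) = Suc (card (anc par u))"
proof -
  have "u \<notin> anc par u" using anc_irrefl[OF assms(1)] by (simp add: anc_def)
  then show ?thesis using anc_Some[of par v u, OF assms(2)] anc_fin[OF assms(1)] by simp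
qed

lemma sa_trans: assumes a: "strict_ancestor par x y" and b: "strict_ancestor par y z"
  shows "strict_ancestor par x z"
  using trancl_trans[OF b[unfolded strict_ancestor_def] a[unfolded strict_ancestor_def]]
  unfolding strict_ancestor_def .

lemma chain_exists:
  assumes rf: "par \<in> rooted_forests n"
  shows "m \<le> card (anc par v) \<Longrightarrow> v \<in> {1..n} \<Longrightarrow>
    \<exists>ws. length ws = Suc m \<and> sorted_wrt (strict_ancestor par) ws \<and> set ws \<subseteq> {1..n}
       \<and> (\<forall>w\<in>set ws. w = v \<or> strict_ancestor par w v)"
proof (induction m arbitrary: v)
  case 0
  then show ?case by (intro exI[of _ "[v]"]) auto
next
  case (Suc m)
  then have "anc par v \<noteq> {}" by auto
  then obtain u where pv: "par v = Some u" using anc_None by (cases "par v") auto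
  have u: "u \<in> {1..n}" using rf_D(2)[OF rf pv] .
  have "m \<le> card (anc par u)" using Suc.prems card_anc_Some[OF rf pv] by simp
  then obtain ws where ws: "length ws = Suc m" "sorted_wrt (strict_ancestor par) ws" "set ws \<subseteq> {1..n}"
    "\<forall>w\<in>set ws. w = u \<or> strict_ancestor par w u"
    using Suc.IH u by blast
  have uv: "strict_ancestor par u v" using pv by (auto simp: strict_ancestor_def parent_rel_def)
  have all: "\<forall>w\<in>set ws. strict_ancestor par w v"
  proof
    fix w assume "w \<in> set ws"
    then have "w = u \<or> strict_ancestor par w u" using ws(4) by blast
    then show "strict_ancestor par w v" using uv sa_trans[of par w u v] by blast
  qed
  show ?case
    by (intro exI[of _ "ws @ [v]"]) (use ws all Suc.prems in \<open>auto simp: sorted_wrt_append\<close>)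
qed

lemma sorted_wrt_irrefl_distinct: "sorted_wrt R xs \<Longrightarrow> (\<forall>x. \<not> R x x) \<Longrightarrow> distinct xs"
  by (induction xs) auto

lemma sorted_lt_iff:
  fixes xs :: "nat list"
  assumes "sorted_wrt (<) xs" "i < length xs" "j < length xs"
  shows "(xs ! i < xs ! j) = (i < j)"
proof (cases i j rule: linorder_cases)
  case less then show ?thesis using assms sorted_wrt_nth_less by blast
next
  case equal then show ?thesis by simp
next
  case greater
  then have "xs ! j < xs ! i" using assms sorted_wrt_nth_less by blast
  then show ?thesis using greater by simp
qed

lemma sorted_gt_iff:
  fixes xs :: "nat list"
  assumes "sorted_wrt (>) xs" "i < length xs" "j < length xs"
  shows "(xs ! i < xs ! j) = (j < i)"
proof (cases i j rule: linorder_cases)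
  case less
  then have "xs ! j < xs ! i" using assms sorted_wrt_nth_less[of "(>)" xs i j] by blast
  then show ?thesis using less by simp
next
  case equal then show ?thesis by simp
next
  case greater
  then show ?thesis using assms sorted_wrt_nth_less[of "(>)" xs j i] by simp
qed

lemma height_bound:
  assumes rf: "par \<in> rooted_forests n" and av: "avoids n par S"
    and p: "p \<in> S" "sorted_wrt (<) p" and q: "q \<in> S" "sorted_wrt (>) q"
    and v: "v \<in> {1..n}"
  shows "card (anc par v) < 2 ^ (length p + length q)"
proof (rule ccontr)
  assume "\<not> ?thesis"
  then have "2 ^ (length p + length q) \<le> card (anc par v)" by simp
  then obtain ws where ws: "length ws = Suc (2 ^ (length p + length q))"
      "sorted_wrt (strict_ancestor par) ws" "set ws \<subseteq> {1..n}"
    using chain_exists[OF rf _ v] by blast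
  have "distinct ws" using sorted_wrt_irrefl_distinct[OF ws(2)] anc_irrefl[OF rf] by blast
  then obtain ys where ys: "subseq ys ws"
     "(length ys = length p \<and> sorted_wrt (<) ys) \<or> (length ys = length q \<and> sorted_wrt (>) ys)"
    using ES[of ws "length p" "length q"] ws(1) by auto
  have ysa: "sorted_wrt (strict_ancestor par) ys" using subseq_sorted_wrt[OF ys(1) ws(2)] .
  have yss: "set ys \<subseteq> {1..n}" using subseq_set[OF ys(1)] ws(3) by blast
  have cons: "\<forall>i. Suc i < length ys \<longrightarrow> strict_ancestor par (ys ! i) (ys ! Suc i)"
    using ysa by (simp add: sorted_wrt_nth_less)
  from ys(2) show False
  proof
    assume h: "length ys = length p \<and> sorted_wrt (<) ys"
    have "is_instance par p ys" unfolding is_instance_def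
    proof (intro conjI allI impI)
      fix i j assume "i < length ys" "j < length ys"
      then show "(ys ! i < ys ! j) = (p ! i < p ! j)"
        using h sorted_lt_iff[of ys i j] sorted_lt_iff[OF p(2), of i j] by simp
    qed (use h cons in auto)
    then have "contains n par p" using yss by (auto simp: contains_def)
    then show False using av p by (auto simp: avoids_def)
  next
    assume h: "length ys = length q \<and> sorted_wrt (>) ys"
    have "is_instance par q ys" unfolding is_instance_def
    proof (intro conjI allI impI)
      fix i j assume "i < length ys" "j < length ys"
      then show "(ys ! i < ys ! j) = (q ! i < q ! j)"
        using h sorted_gt_iff[of ys i j] sorted_gt_iff[OF q(2), of i j] by simp
    qed (use h cons in auto)
    then have "contains n par q" using yss by (auto simp: contains_def)
    then show False using av q by (auto simp: avoids_def)
  qed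
qed



definition ext :: "nat \<Rightarrow> (nat \<Rightarrow> nat option) \<Rightarrow> nat \<Rightarrow> nat option" where
  "ext n g = (\<lambda>v. if v \<in> {1..n} then g v else None)"

lemma ext_restrict: "par \<in> rooted_forests n \<Longrightarrow> ext n (restrict par {1..n}) = par"
  unfolding ext_def using rf_D(1)[of par n] by (intro ext) auto

lemma inj_ext: "inj_on (ext n) (PiE {1..n} B)"
proof (rule inj_onI)
  fix x y assume x: "x \<in> PiE {1..n} B" and y: "y \<in> PiE {1..n} B" and e: "ext n x = ext n y"
  show "x = y"
  proof (rule PiE_ext[OF x y])
    fix i assume "i \<in> {1..n}"
    then show "x i = y i" using fun_cong[OF e, of i] by (simp add: ext_def)
  qed
qed

lemma card_ext_PiE: "card (ext n ` PiE {1..n} B) = (\<Prod>v\<in>{1..n}. card (B v))"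
  using card_image[OF inj_ext] card_PiE[of "{1..n}" B] by simp

lemma finite_ext_PiE: "(\<And>v. v \<in> {1..n} \<Longrightarrow> finite (B v)) \<Longrightarrow> finite (ext n ` PiE {1..n} B)"
  using finite_PiE[of "{1..n}" B] by simp

lemma rf_sub_all: "rooted_forests n \<subseteq> ext n ` PiE {1..n} (\<lambda>_. insert None (Some ` {1..n}))"
proof
  fix par assume rf: "par \<in> rooted_forests n"
  have "restrict par {1..n} \<in> PiE {1..n} (\<lambda>_. insert None (Some ` {1..n}))"
  proof (rule restrict_PiE_iff[THEN iffD2], intro ballI)
    fix v assume "v \<in> {1..n}"
    show "par v \<in> insert None (Some ` {1..n})"
    proof (cases "par v")
      case None then show ?thesis by simp
    next
      case (Some u) then show ?thesis using rf_D(2)[OF rf Some] by simp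
    qed
  qed
  then show "par \<in> ext n ` PiE {1..n} (\<lambda>_. insert None (Some ` {1..n}))"
    using ext_restrict[OF rf] by (metis image_eqI)
qed

lemma card_opt: "card (insert None (Some ` A)) = Suc (card A)" if "finite A"
  using that by (simp add: card_image)

lemma rf_finite: "finite (rooted_forests n)"
  by (rule finite_subset[OF rf_sub_all finite_ext_PiE]) simp

lemma num_le: "num_avoiding S n \<le> Suc n ^ n"
proof -
  have "num_avoiding S n \<le> card (rooted_forests n)"
    unfolding num_avoiding_def by (rule card_mono[OF rf_finite]) auto
  also have "\<dots> \<le> card (ext n ` PiE {1..n} (\<lambda>_. insert None (Some ` {1..n})))"
    by (rule card_mono[OF finite_ext_PiE rf_sub_all]) simp
  also have "\<dots> = Suc n ^ n" unfolding card_ext_PiE by (simp add: card_image)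
  finally show ?thesis .
qed

lemma sa_less:
  assumes "parent_rel par \<subseteq> {(v, u). u < v}" "strict_ancestor par u v"
  shows "u < v"
proof -
  have "(v, u) \<in> (parent_rel par)\<^sup>+" using assms(2) by (simp add: strict_ancestor_def)
  then show ?thesis
  proof (induction rule: trancl_induct)
    case (base y) then show ?case using assms(1) by blast
  next
    case (step y z) then show ?case using assms(1) by fastforce
  qed
qed

lemma sa_greater:
  assumes "parent_rel par \<subseteq> {(v, u). v < u}" "strict_ancestor par u v"
  shows "v < u"
proof -
  have "(v, u) \<in> (parent_rel par)\<^sup>+" using assms(2) by (simp add: strict_ancestor_def)
  then show ?thesis
  proof (induction rule: trancl_induct)
    case (base y) then show ?case using assms(1) by blast
  next
    case (step y z) then show ?case using assms(1) by fastforce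
  qed
qed

lemma acyc_less:
  assumes "parent_rel par \<subseteq> {(v, u). u < v}" shows "acyclic (parent_rel par)"
  unfolding acyclic_def
proof
  fix x show "(x, x) \<notin> (parent_rel par)\<^sup>+"
    using sa_less[OF assms, of x x] by (auto simp: strict_ancestor_def)
qed

lemma acyc_greater:
  assumes "parent_rel par \<subseteq> {(v, u). v < u}" shows "acyclic (parent_rel par)"
  unfolding acyclic_def
proof
  fix x show "(x, x) \<notin> (parent_rel par)\<^sup>+"
    using sa_greater[OF assms, of x x] by (auto simp: strict_ancestor_def)
qed

lemma inc_sorted:
  assumes "parent_rel par \<subseteq> {(v, u). u < v}" "is_instance par p vs"
  shows "sorted_wrt (<) p"
proof -
  have L: "length vs = length p" using assms(2) by (simp add: is_instance_def)
  have "\<forall>i. Suc i < length vs \<longrightarrow> vs ! i < vs ! Suc i"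
    using assms(2) sa_less[OF assms(1)] by (simp add: is_instance_def)
  then have sv: "sorted_wrt (<) vs" by (simp add: sorted_wrt_iff_nth_Suc_transp)
  show ?thesis unfolding sorted_wrt_iff_nth_less
  proof (intro allI impI)
    fix i j assume ij: "i < j" "j < length p"
    then have "vs ! i < vs ! j" using sv L sorted_wrt_nth_less by (metis)
    then show "p ! i < p ! j" using assms(2) ij L by (simp add: is_instance_def)
  qed
qed

lemma dec_sorted:
  assumes "parent_rel par \<subseteq> {(v, u). v < u}" "is_instance par p vs"
  shows "sorted_wrt (>) p"
proof -
  have L: "length vs = length p" using assms(2) by (simp add: is_instance_def)
  have "\<forall>i. Suc i < length vs \<longrightarrow> vs ! i > vs ! Suc i"
    using assms(2) sa_greater[OF assms(1)] by (simp add: is_instance_def)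
  then have sv: "sorted_wrt (>) vs" by (simp add: sorted_wrt_iff_nth_Suc_transp)
  show ?thesis unfolding sorted_wrt_iff_nth_less
  proof (intro allI impI)
    fix i j assume ij: "i < j" "j < length p"
    then have "vs ! i > vs ! j" using sv L sorted_wrt_nth_less[of "(>)" vs i j] by simp
    then have "\<not> vs ! j > vs ! i" by simp
    then have "\<not> p ! j > p ! i" using assms(2) ij L by (simp add: is_instance_def)
    moreover have "p ! i \<noteq> p ! j" using \<open>vs ! i > vs ! j\<close> assms(2) ij L
      by (auto simp: is_instance_def)
    ultimately show "p ! i > p ! j" by simp
  qed
qed



lemma ext_Some:
  assumes "g \<in> PiE {1..n} B" "ext n g v = Some u"
  shows "v \<in> {1..n} \<and> Some u \<in> B v"
proof -
  have v: "v \<in> {1..n}" using assms(2) by (auto simp: ext_def split: if_splits)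
  then have "g v = Some u" using assms(2) by (simp add: ext_def)
  then show ?thesis using v PiE_mem[OF assms(1) v] by simp
qed

lemma ext_outside: assumes "v \<notin> {1..n}" shows "ext n g v = None"
  unfolding ext_def using assms by (simp only: if_False)

lemma num_ge_inc:
  assumes S: "\<forall>p\<in>S. \<not> sorted_wrt (<) p"
  shows "fact n \<le> num_avoiding S n"
proof -
  define B where "B = (\<lambda>v::nat. insert None (Some ` {1..<v}))"
  have sub: "ext n ` PiE {1..n} B \<subseteq> {par \<in> rooted_forests n. avoids n par S}"
  proof
    fix par assume "par \<in> ext n ` PiE {1..n} B"
    then obtain g where g: "g \<in> PiE {1..n} B" and par: "par = ext n g" by blast
    have ps: "\<And>v u. par v = Some u \<Longrightarrow> v \<in> {1..n} \<and> u \<in> {1..<v}"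
      using ext_Some[OF g] unfolding par B_def by fastforce
    have pr: "parent_rel par \<subseteq> {(v, u). u < v}"
      using ps by (auto simp: parent_rel_def)
    have rf: "par \<in> rooted_forests n"
      unfolding rooted_forests_def
    proof (intro CollectI conjI allI impI)
      fix v assume "v \<notin> {1..n}" then show "par v = None" unfolding par by (rule ext_outside)
    next
      fix v u assume "par v = Some u" then show "u \<in> {1..n}" using ps[of v u] by auto
    next
      show "acyclic (parent_rel par)" by (rule acyc_less[OF pr])
    qed
    have "avoids n par S" unfolding avoids_def contains_def
      using inc_sorted[OF pr] S by blast
    then show "par \<in> {par \<in> rooted_forests n. avoids n par S}" using rf by simp
  qed
  have "card (ext n ` PiE {1..n} B) = (\<Prod>v\<in>{1..n}. card (B v))" by (rule card_ext_PiE)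
  also have "\<dots> = (\<Prod>v\<in>{1..n}. v)"
    by (rule prod.cong) (auto simp: B_def card_image)
  also have "\<dots> = fact n" by (simp add: fact_prod)
  finally have "fact n = card (ext n ` PiE {1..n} B)" by simp
  also have "\<dots> \<le> num_avoiding S n" unfolding num_avoiding_def
    by (rule card_mono[OF _ sub]) (simp add: rf_finite)
  finally show ?thesis .
qed

lemma prod_rev_fact: "(\<Prod>v\<in>{1..n}. Suc (n - v)) = (fact n :: nat)"
proof -
  have "(\<Prod>v\<in>{1..n}. Suc (n - v)) = (\<Prod>w\<in>{1..n}. w)"
    by (rule prod.reindex_bij_witness[where i="\<lambda>w. Suc n - w" and j="\<lambda>v. Suc n - v"]) auto
  then show ?thesis by (simp add: fact_prod)
qed

lemma num_ge_dec:
  assumes S: "\<forall>p\<in>S. \<not> sorted_wrt (>) p"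
  shows "fact n \<le> num_avoiding S n"
proof -
  define B where "B = (\<lambda>v::nat. insert None (Some ` {v<..n}))"
  have sub: "ext n ` PiE {1..n} B \<subseteq> {par \<in> rooted_forests n. avoids n par S}"
  proof
    fix par assume "par \<in> ext n ` PiE {1..n} B"
    then obtain g where g: "g \<in> PiE {1..n} B" and par: "par = ext n g" by blast
    have ps: "\<And>v u. par v = Some u \<Longrightarrow> v \<in> {1..n} \<and> u \<in> {v<..n}"
      using ext_Some[OF g] unfolding par B_def by fastforce
    have pr: "parent_rel par \<subseteq> {(v, u). v < u}"
      using ps by (auto simp: parent_rel_def)
    have rf: "par \<in> rooted_forests n"
      unfolding rooted_forests_def
    proof (intro CollectI conjI allI impI)
      fix v assume "v \<notin> {1..n}" then show "par v = None" unfolding par by (rule ext_outside)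
    next
      fix v u assume "par v = Some u" then show "u \<in> {1..n}" using ps[of v u] by auto
    next
      show "acyclic (parent_rel par)" by (rule acyc_greater[OF pr])
    qed
    have "avoids n par S" unfolding avoids_def contains_def
      using dec_sorted[OF pr] S by blast
    then show "par \<in> {par \<in> rooted_forests n. avoids n par S}" using rf by simp
  qed
  have "card (ext n ` PiE {1..n} B) = (\<Prod>v\<in>{1..n}. card (B v))" by (rule card_ext_PiE)
  also have "\<dots> = (\<Prod>v\<in>{1..n}. Suc (n - v))"
    by (rule prod.cong) (auto simp: B_def card_image)
  also have "\<dots> = fact n" by (rule prod_rev_fact)
  finally have "fact n = card (ext n ` PiE {1..n} B)" by simp
  also have "\<dots> \<le> num_avoiding S n" unfolding num_avoiding_def
    by (rule card_mono[OF _ sub]) (simp add: rf_finite)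
  finally show ?thesis .
qed



definition Bset :: "nat \<Rightarrow> (nat \<Rightarrow> nat) \<Rightarrow> nat \<Rightarrow> nat option set" where
  "Bset n l v = (if l v = 1 then {None} else Some ` {u \<in> {1..n}. l u = l v - 1})"

lemma forest_in:
  assumes rf: "par \<in> rooted_forests n" and av: "avoids n par S"
    and p: "p \<in> S" "sorted_wrt (<) p" and q: "q \<in> S" "sorted_wrt (>) q"
  defines "H \<equiv> 2 ^ (length p + length q)"
  shows "par \<in> (\<Union>l\<in>PiE {1..n} (\<lambda>_. {1..H}). ext n ` PiE {1..n} (Bset n l))"
proof -
  define l where "l = restrict (\<lambda>v. Suc (card (anc par v))) {1..n}"
  have lP: "l \<in> PiE {1..n} (\<lambda>_. {1..H})"
    unfolding l_def H_def using height_bound[OF rf av p q] by (auto simp: Suc_le_eq)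
  have "restrict par {1..n} \<in> PiE {1..n} (Bset n l)"
  proof (rule restrict_PiE_iff[THEN iffD2], intro ballI)
    fix v assume v: "v \<in> {1..n}"
    show "par v \<in> Bset n l v"
    proof (cases "par v")
      case None
      then have "l v = 1" using v anc_None[of par v] by (simp add: l_def)
      then show ?thesis using None by (simp add: Bset_def)
    next
      case (Some u)
      have u: "u \<in> {1..n}" using rf_D(2)[OF rf Some] .
      have c: "card (anc par v) = Suc (card (anc par u))" using card_anc_Some[OF rf Some] .
      have "l v = Suc (Suc (card (anc par u)))" using v c by (simp add: l_def)
      moreover have "l u = Suc (card (anc par u))" using u by (simp add: l_def)
      ultimately show ?thesis using Some u by (simp add: Bset_def)
    qed
  qed
  then have "par \<in> ext n ` PiE {1..n} (Bset n l)"
    using ext_restrict[OF rf] by (metis image_eqI)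
  then show ?thesis using lP by blast
qed

lemma prod_bound:
  fixes R :: real
  assumes l: "l \<in> PiE {1..n} (\<lambda>_. {1..H})" and R: "0 < R"
  shows "R ^ n * real (\<Prod>v\<in>{1..n}. card (Bset n l v)) \<le> fact n * exp (CC R H)"
proof -
  define N where "N d = (if d = 0 then 1 else card {u \<in> {1..n}. l u = d})" for d
  have lv: "\<And>v. v \<in> {1..n} \<Longrightarrow> l v \<in> {1..H}" using l by auto
  have cB: "card (Bset n l v) = N (l v - 1)" if v: "v \<in> {1..n}" for v
  proof (cases "l v = 1")
    case True then show ?thesis by (simp add: Bset_def N_def)
  next
    case False
    then have "l v - 1 \<noteq> 0" using lv[OF v] by auto
    then show ?thesis using False by (simp add: Bset_def N_def card_image)
  qed
  have "R ^ n * real (\<Prod>v\<in>{1..n}. card (Bset n l v)) = (\<Prod>v\<in>{1..n}. R * real (N (l v - 1)))"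
    by (simp add: prod.distrib cB)
  also have "\<dots> = (\<Prod>d\<in>{1..H}. \<Prod>v\<in>{v \<in> {1..n}. l v = d}. R * real (N (l v - 1)))"
    by (rule prod.group[symmetric]) (use lv in auto)
  also have "\<dots> = (\<Prod>d\<in>{1..H}. (R * real (N (d - 1))) ^ N d)"
  proof (rule prod.cong[OF refl])
    fix d assume d: "d \<in> {1..H}"
    have "(\<Prod>v\<in>{v \<in> {1..n}. l v = d}. R * real (N (l v - 1)))
          = (\<Prod>v\<in>{v \<in> {1..n}. l v = d}. R * real (N (d - 1)))" by (rule prod.cong) auto
    also have "\<dots> = (R * real (N (d - 1))) ^ N d" using d by (simp add: N_def)
    finally show "(\<Prod>v\<in>{v \<in> {1..n}. l v = d}. R * real (N (l v - 1))) = (R * real (N (d - 1))) ^ N d" .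
  qed
  also have "\<dots> \<le> (\<Prod>d\<in>{0+1..0+H}. fact (N d)) * exp (CC R H * real (N 0))"
    using level_ineq[of R N 0 H] R by simp
  also have "\<dots> = real (\<Prod>d\<in>{1..H}. fact (N d)) * exp (CC R H)"
    by (simp add: N_def)
  also have "\<dots> \<le> real (fact (\<Sum>d\<in>{1..H}. N d)) * exp (CC R H)"
    using prod_fact_le[of "{1..H}" N] by (intro mult_right_mono) (simp_all only: of_nat_le_iff finite_atLeastAtMost exp_ge_zero)
  also have "(\<Sum>d\<in>{1..H}. N d) = n"
  proof -
    have "(\<Sum>d\<in>{1..H}. N d) = (\<Sum>d\<in>{1..H}. \<Sum>v\<in>{v \<in> {1..n}. l v = d}. (1::nat))"
      by (rule sum.cong) (auto simp: N_def)
    also have "\<dots> = (\<Sum>v\<in>{1..n}. (1::nat))"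
      by (rule sum.group) (use lv in auto)
    finally show ?thesis by simp
  qed
  finally show ?thesis by simp
qed

lemma height_count:
  fixes R :: real
  assumes p: "p \<in> S" "sorted_wrt (<) p" and q: "q \<in> S" "sorted_wrt (>) q" and R: "0 < R"
  defines "H \<equiv> 2 ^ (length p + length q)"
  shows "R ^ n * real (num_avoiding S n) \<le> real H ^ n * fact n * exp (CC R H)"
proof -
  let ?I = "PiE {1..n} (\<lambda>_. {1..H})"
  let ?A = "\<lambda>l. ext n ` PiE {1..n} (Bset n l)"
  have finI: "finite ?I" by (rule finite_PiE) auto
  have finA: "\<And>l. finite (?A l)" by (rule finite_ext_PiE) (simp add: Bset_def)
  have sub: "{par \<in> rooted_forests n. avoids n par S} \<subseteq> (\<Union>l\<in>?I. ?A l)"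
    using forest_in[OF _ _ p q] unfolding H_def by blast
  have "num_avoiding S n \<le> card (\<Union>l\<in>?I. ?A l)"
    unfolding num_avoiding_def by (rule card_mono[OF _ sub]) (use finI finA in blast)
  also have "\<dots> \<le> (\<Sum>l\<in>?I. card (?A l))" by (rule card_UN_le[OF finI])
  also have "\<dots> = (\<Sum>l\<in>?I. \<Prod>v\<in>{1..n}. card (Bset n l v))" by (simp only: card_ext_PiE)
  finally have "real (num_avoiding S n) \<le> (\<Sum>l\<in>?I. real (\<Prod>v\<in>{1..n}. card (Bset n l v)))"
    by (simp only: of_nat_le_iff of_nat_sum[symmetric])
  then have "R ^ n * real (num_avoiding S n) \<le> R ^ n * (\<Sum>l\<in>?I. real (\<Prod>v\<in>{1..n}. card (Bset n l v)))"
    using R by (intro mult_left_mono) simp_all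
  also have "\<dots> = (\<Sum>l\<in>?I. R ^ n * real (\<Prod>v\<in>{1..n}. card (Bset n l v)))"
    by (simp add: sum_distrib_left)
  also have "\<dots> \<le> (\<Sum>l\<in>?I. fact n * exp (CC R H))"
    by (rule sum_mono) (rule prod_bound[OF _ R], assumption)
  also have "\<dots> = real H ^ n * fact n * exp (CC R H)"
    by (simp add: card_PiE)
  finally show ?thesis .
qed



lemma g_upper:
  assumes n: "0 < n"
  shows "root n (real (num_avoiding S n)) / real n \<le> real (Suc n) / real n"
proof -
  have "real (num_avoiding S n) \<le> real (Suc n) ^ n"
    using num_le[of S n] by (simp only: of_nat_le_iff of_nat_power[symmetric])
  then have "root n (real (num_avoiding S n)) \<le> root n (real (Suc n) ^ n)"
    by (rule real_root_le_mono[OF n])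
  also have "\<dots> = real (Suc n)" using n by (simp only: real_root_power_cancel of_nat_0_le_iff)
  finally show ?thesis using n by (simp add: divide_right_mono)
qed

lemma g_lower:
  assumes n: "0 < n" and f: "fact n \<le> num_avoiding S n"
  shows "exp (-1) \<le> root n (real (num_avoiding S n)) / real n"
proof -
  have "real n ^ n \<le> fact n * exp (real n)" by (rule pow_le_fact_exp) simp
  then have "(real n / exp 1) ^ n \<le> fact n"
    by (simp add: power_divide divide_le_eq exp_of_nat_mult[symmetric] mult.commute)
  also have "(fact n :: real) \<le> real (num_avoiding S n)"
    using f by (metis of_nat_fact of_nat_le_iff)
  finally have "root n ((real n / exp 1) ^ n) \<le> root n (real (num_avoiding S n))"
    using n by (intro real_root_le_mono) auto
  then have "real n / exp 1 \<le> root n (real (num_avoiding S n))"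
    using n by (simp add: real_root_power_cancel)
  then show ?thesis using n by (simp add: exp_minus field_simps)
qed

lemma g_height:
  fixes R :: real
  assumes n: "0 < n" and p: "p \<in> S" "sorted_wrt (<) p" and q: "q \<in> S" "sorted_wrt (>) q" and R: "0 < R"
  defines "H \<equiv> 2 ^ (length p + length q)"
  shows "root n (real (num_avoiding S n)) / real n \<le> real H / R * root n (exp (CC R H))"
proof -
  have "R ^ n * real (num_avoiding S n) \<le> real H ^ n * fact n * exp (CC R H)"
    using height_count[OF p q R] unfolding H_def .
  also have "\<dots> \<le> real H ^ n * real n ^ n * exp (CC R H)"
    using fact_le_power[of n, where 'a=real] by (intro mult_right_mono mult_left_mono) simp_all
  finally have "real (num_avoiding S n) \<le> (real H * real n / R) ^ n * exp (CC R H)"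
    using R by (simp add: power_divide power_mult_distrib field_simps)
  then have "root n (real (num_avoiding S n)) \<le> root n ((real H * real n / R) ^ n * exp (CC R H))"
    by (rule real_root_le_mono[OF n])
  also have "\<dots> = real H * real n / R * root n (exp (CC R H))"
    using n R by (simp add: real_root_mult real_root_power_cancel)
  finally show ?thesis using n by (simp add: field_simps)
qed

theorem corollary5p10:
  fixes S :: "nat list set" and L :: real
  assumes "\<forall>p\<in>S. is_pattern p"
    and lim: "(\<lambda>n. root n (real (num_avoiding S n)) / real n) \<longlonglongrightarrow> L"
  shows "L = 0 \<or> (exp (-1) \<le> L \<and> L \<le> 1)"
proof -
  let ?g = "\<lambda>n. root n (real (num_avoiding S n)) / real n"
  have L1: "L \<le> 1"
  proof (rule LIMSEQ_le[OF lim LIMSEQ_Suc_n_over_n])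
    show "\<exists>N. \<forall>n\<ge>N. ?g n \<le> of_nat (Suc n) / of_nat n"
      using g_upper by (intro exI[of _ 1]) auto
  qed
  have L0: "0 \<le> L"
    by (rule LIMSEQ_le_const[OF lim]) (auto intro!: divide_nonneg_nonneg real_root_ge_zero)
  show ?thesis
  proof (cases "(\<exists>p\<in>S. sorted_wrt (<) p) \<and> (\<exists>q\<in>S. sorted_wrt (>) q)")
    case True
    then obtain p q where p: "p \<in> S" "sorted_wrt (<) p" and q: "q \<in> S" "sorted_wrt (>) q" by blast
    define H where "H = (2::nat) ^ (length p + length q)"
    have H0: "0 < real H" by (simp add: H_def)
    have "L = 0"
    proof (rule ccontr)
      assume "L \<noteq> 0"
      then have Lp: "0 < L" using L0 by simp
      define R where "R = 2 * real H / L"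
      have R: "0 < R" using H0 Lp by (simp add: R_def)
      have lim2: "(\<lambda>n. real H / R * root n (exp (CC R H))) \<longlonglongrightarrow> real H / R * 1"
        by (intro tendsto_mult tendsto_const LIMSEQ_root_const) simp
      have "L \<le> real H / R * 1"
      proof (rule LIMSEQ_le[OF lim lim2])
        show "\<exists>N. \<forall>n\<ge>N. ?g n \<le> real H / R * root n (exp (CC R H))"
          using g_height[OF _ p q R] unfolding H_def by (intro exI[of _ 1]) auto
      qed
      also have "\<dots> = L / 2" using H0 Lp by (simp add: R_def field_simps)
      finally show False using Lp by simp
    qed
    then show ?thesis by simp
  next
    case False
    then have "(\<forall>p\<in>S. \<not> sorted_wrt (<) p) \<or> (\<forall>p\<in>S. \<not> sorted_wrt (>) p)" by blast
    then have f: "\<And>n. fact n \<le> num_avoiding S n" using num_ge_inc num_ge_dec by blast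
    have "exp (-1) \<le> L"
      by (rule LIMSEQ_le_const[OF lim]) (use g_lower f in \<open>intro exI[of _ 1], auto\<close>)
    then show ?thesis using L1 by simp
  qed
qed

end
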